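(* If $d_1-p_1\le d_2-p_2\le\cdots\le d_n-p_n$, then first-fit satisfies $FF(I)<2\,OPT(I)$ for every such instance $I$ with $OPT(I)\ge2$ (and $FF(I)=1$ when $OPT(I)=1$); in particular first-fit is a 2-approximation on this class. The bound is tight: for every integer $k\ge1$, the instance with $3k+1$ jobs $a_1,\dots,a_k$ with $(p,d)=(k,2k)$, $b_1,\dots,b_k$ with $(p,d)=(1,k+1)$, $c_1,\dots,c_{k+1}$ with $(p,d)=(k+1,2k+1)$, in the fixed order $a_1,b_1,\dots,a_k,b_k,c_1,\dots,c_{k+1}$ (all slacks equal $k$), has $OPT(I)=k+1$ and $FF(I)=2k+1$.
   Context: Fixed order scheduling with deadlines: there are jobs $J=\{1,\dots,n\}$, each job $j$ having a processing time $p_j\in\mathbb{N}$, $p_j>0$, and a deadline $d_j\in\mathbb{N}$ with $d_j\ge p_j$; the slack of job $j$ is $d_j-p_j$. All jobs are released at time $0$; job $j$ precedes job $k$ in the fixed order iff $j<k$. A schedule $\tau:J\to\{1,\dots,n\}$ assigns jobs to identical machines; each machine processes its jobs in the fixed order from time $0$ without idle time or preemption, so job $j$ completes at $\sum_{k\le j,\tau(k)=\tau(j)}p_k$; it is feasible if every job completes by its deadline. $OPT(I)$ is the minimum number of machines used by a feasible schedule. First-fit (FF): machines indexed $1,2,\dots$; process jobs in the fixed order and assign each job $j$ to the smallest-index machine whose current load (sum of processing times already assigned) plus $p_j$ is at most $d_j$; $FF(I)$ is the number of nonempty machines. *)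

theory Defs
  imports Main
begin

text \<open>An instance is a list of jobs (p, d) in the fixed order; job j is I ! j (0-based).\<close>
type_synonym fo_instance = "(nat \<times> nat) list"

definition valid_instance :: "fo_instance \<Rightarrow> bool" where
  "valid_instance I \<longleftrightarrow> (\<forall>(p, d) \<in> set I. 0 < p \<and> p \<le> d)"

definition slack :: "nat \<times> nat \<Rightarrow> nat" where
  "slack job = snd job - fst job"

definition completion :: "fo_instance \<Rightarrow> (nat \<Rightarrow> nat) \<Rightarrow> nat \<Rightarrow> nat" where
  "completion I tau j = (\<Sum>k\<in>{k. k \<le> j \<and> tau k = tau j}. fst (I ! k))"

text \<open>tau assigns jobs 0..n-1 to machines 0..n-1 (values outside the job range are irrelevant).\<close>
definition feasible :: "fo_instance \<Rightarrow> (nat \<Rightarrow> nat) \<Rightarrow> bool" where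
  "feasible I tau \<longleftrightarrow> (\<forall>j < length I. tau j < length I \<and> completion I tau j \<le> snd (I ! j))"

definition machines_used :: "fo_instance \<Rightarrow> (nat \<Rightarrow> nat) \<Rightarrow> nat" where
  "machines_used I tau = card (tau ` {..<length I})"

definition OPT :: "fo_instance \<Rightarrow> nat" where
  "OPT I = Min {machines_used I tau | tau. feasible I tau}"

text \<open>First-fit: L i is the current load of machine i; returns the machine index of each job.\<close>
fun ff_run :: "fo_instance \<Rightarrow> (nat \<Rightarrow> nat) \<Rightarrow> nat list" where
  "ff_run [] L = []"
| "ff_run ((p, d) # js) L =
     (let i = (LEAST i. L i + p \<le> d) in i # ff_run js (L(i := L i + p)))"

definition FF :: "fo_instance \<Rightarrow> nat" where
  "FF I = card (set (ff_run I (\<lambda>_. 0)))"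

definition tight_inst :: "nat \<Rightarrow> fo_instance" where
  "tight_inst k = concat (map (\<lambda>_. [(k, 2*k), (1, k+1)]) [0..<k]) @ replicate (k+1) (k+1, 2*k+1)"

end

theory Submission
  imports Defs
begin

lemma ff_len: "length (ff_run I L) = length I"
  by (induction I arbitrary: L) (auto simp: Let_def)

lemma ff_nth:
  "j < length I \<Longrightarrow> ff_run I L ! j =
     (LEAST i. L i + (\<Sum>k<j. if ff_run I L ! k = i then fst (I ! k) else 0) + fst (I ! j) \<le> snd (I ! j))"
proof (induction I arbitrary: L j)
  case Nil
  then show ?case by simp
next
  case (Cons a js)
  obtain p d where a: "a = (p, d)" by (cases a)
  define i0 where "i0 = (LEAST i. L i + p \<le> d)"
  define L' where "L' = L(i0 := L i0 + p)"
  have f: "ff_run (a # js) L = i0 # ff_run js L'"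
    by (simp add: a i0_def L'_def Let_def)
  show ?case
  proof (cases j)
    case 0
    then show ?thesis by (simp add: f a i0_def Let_def)
  next
    case (Suc j')
    with Cons.prems have j': "j' < length js" by simp
    have eq: "L' i + (\<Sum>k<j'. if ff_run js L' ! k = i then fst (js ! k) else 0)
       = L i + (\<Sum>k<Suc j'. if (i0 # ff_run js L') ! k = i then fst ((a # js) ! k) else 0)" for i
      unfolding sum.lessThan_Suc_shift nth_Cons_Suc nth_Cons_0 by (simp add: L'_def a)
    have "ff_run (a # js) L ! j = ff_run js L' ! j'" by (simp add: f Suc)
    also have "\<dots> = (LEAST i. L' i + (\<Sum>k<j'. if ff_run js L' ! k = i then fst (js ! k) else 0) + fst (js ! j') \<le> snd (js ! j'))"
      using Cons.IH[OF j'] .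
    also have "\<dots> = (LEAST i. L i + (\<Sum>k<j. if ff_run (a # js) L ! k = i then fst ((a # js) ! k) else 0) + fst ((a # js) ! j) \<le> snd ((a # js) ! j))"
      unfolding f Suc by (simp only: eq nth_Cons_Suc)
    finally show ?thesis .
  qed
qed

lemma pair:
  assumes srt: "sorted (map slack I)" and j: "j < length I" and kk: "k < k'" "k' \<le> j"
    and tau: "tau k = tau k'" and c: "completion I tau k' \<le> snd (I ! k')"
  shows "fst (I ! k) \<le> slack (I ! j)"
proof -
  have fin: "finite {x. x \<le> k' \<and> tau x = tau k'}" by simp
  have sub: "{k, k'} \<subseteq> {x. x \<le> k' \<and> tau x = tau k'}" using kk tau by auto
  have "fst (I ! k) + fst (I ! k') = (\<Sum>x\<in>{k,k'}. fst (I ! x))" using kk by simp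
  also have "\<dots> \<le> completion I tau k'" unfolding completion_def
    by (rule sum_mono2[OF fin sub]) simp
  finally have "fst (I ! k) \<le> slack (I ! k')" using c by (simp add: slack_def)
  also have "slack (I ! k') \<le> slack (I ! j)"
    using sorted_nth_mono[OF srt, of k' j] kk j by simp
  finally show ?thesis .
qed

lemma opt_props:
  assumes v: "valid_instance I"
  shows "\<exists>tau. feasible I tau \<and> OPT I = machines_used I tau"
    and "feasible I tau \<Longrightarrow> OPT I \<le> machines_used I tau"
proof -
  let ?S = "{machines_used I tau | tau. feasible I tau}"
  have fin: "finite ?S"
  proof (rule finite_subset[of _ "{..length I}"])
    show "?S \<subseteq> {..length I}"
      using card_image_le[of "{..<length I}"] by (auto simp: machines_used_def)
  qed simp
  have "feasible I id"
  proof -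
    { fix j assume j: "j < length I"
      have "{k. k \<le> j \<and> id k = id j} = {j}" by auto
      then have "completion I id j = fst (I ! j)" by (simp add: completion_def)
      moreover have "I ! j \<in> set I" using j by simp
      ultimately have "completion I id j \<le> snd (I ! j)" using v
        unfolding valid_instance_def by (cases "I ! j") auto }
    then show ?thesis by (simp add: feasible_def)
  qed
  then have ne: "?S \<noteq> {}" by blast
  show "\<exists>tau. feasible I tau \<and> OPT I = machines_used I tau"
    using Min_in[OF fin ne] unfolding OPT_def by auto
  show "feasible I tau \<Longrightarrow> OPT I \<le> machines_used I tau"
    unfolding OPT_def by (rule Min_le[OF fin]) blast
qed

lemma valid_D: "valid_instance I \<Longrightarrow> x \<in> set I \<Longrightarrow> 0 < fst x \<and> fst x \<le> snd x"
  unfolding valid_instance_def by (cases x) auto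

lemma completion_split:
  "completion I tau j = (\<Sum>k<j. if tau k = tau j then fst (I ! k) else 0) + fst (I ! j)"
proof -
  have "{k. k \<le> j \<and> tau k = tau j} = insert j {k \<in> {..<j}. tau k = tau j}" by auto
  then have "completion I tau j = fst (I ! j) + (\<Sum>k\<in>{k \<in> {..<j}. tau k = tau j}. fst (I ! k))"
    unfolding completion_def by simp
  also have "(\<Sum>k\<in>{k \<in> {..<j}. tau k = tau j}. fst (I ! k)) = (\<Sum>k<j. if tau k = tau j then fst (I ! k) else 0)"
    by (rule sum.inter_filter) simp
  finally show ?thesis by simp
qed

lemma ff_props:
  fixes I defines "f \<equiv> ff_run I (\<lambda>_. 0)"
  assumes v: "valid_instance I" and j: "j < length I"
  shows "completion I (\<lambda>x. f ! x) j \<le> snd (I ! j)"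
    and "i < f ! j \<Longrightarrow> snd (I ! j) < (\<Sum>k<j. if f ! k = i then fst (I ! k) else 0) + fst (I ! j)"
proof -
  define P where "P = (\<lambda>i. (\<Sum>k<j. if f ! k = i then fst (I ! k) else 0) + fst (I ! j) \<le> snd (I ! j))"
  have fj: "f ! j = (LEAST i. P i)" using ff_nth[OF j, of "\<lambda>_. 0"] by (simp add: f_def P_def)
  obtain i1 where i1: "i1 \<notin> (\<lambda>k. f ! k) ` {..<j}"
    using ex_new_if_finite[OF infinite_UNIV_nat, of "(\<lambda>k. f ! k) ` {..<j}"] by auto
  have "I ! j \<in> set I" using j by simp
  then have pd: "fst (I ! j) \<le> snd (I ! j)" using valid_D[OF v] by blast
  have "(\<Sum>k<j. if f ! k = i1 then fst (I ! k) else 0) = 0"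
    using i1 by (intro sum.neutral) auto
  then have "P i1" unfolding P_def using pd by simp
  then have "P (f ! j)" unfolding fj by (rule LeastI)
  then show "completion I (\<lambda>x. f ! x) j \<le> snd (I ! j)"
    unfolding completion_split P_def by simp
  show "i < f ! j \<Longrightarrow> snd (I ! j) < (\<Sum>k<j. if f ! k = i then fst (I ! k) else 0) + fst (I ! j)"
    using not_less_Least[of i P] unfolding fj[symmetric] unfolding P_def by (simp add: not_le)
qed

lemma ff_bound:
  assumes v: "valid_instance I" and srt: "sorted (map slack I)" and feas: "feasible I tau"
    and ne: "I \<noteq> []"
  shows "card (set (ff_run I (\<lambda>_. 0))) + 1 \<le> 2 * machines_used I tau"
proof -
  define n where "n = length I"
  define f where "f = ff_run I (\<lambda>_. 0)"
  define M where "M = machines_used I tau"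
  have lf: "length f = n" by (simp add: f_def n_def ff_len)
  have sf: "set f \<noteq> {}" using ne lf n_def by auto
  define c where "c = Max (set f)"
  have "c \<in> set f" using sf by (simp add: c_def)
  then obtain j where j: "j < n" "f ! j = c" using lf by (auto simp: in_set_conv_nth)
  have fle: "f ! k \<le> c" if "k < n" for k
    unfolding c_def using that lf by (intro Max_ge) auto
  have fcomp: "completion I (\<lambda>x. f ! x) k \<le> snd (I ! k)" if "k < n" for k
    using ff_props(1)[OF v, of k] that unfolding f_def n_def by simp
  have tcomp: "completion I tau k \<le> snd (I ! k)" if "k < n" for k
    using feas that unfolding feasible_def n_def by simp
  define s where "s = slack (I ! j)"
  have jI: "I ! j \<in> set I" using j n_def by simp
  have dj: "snd (I ! j) = s + fst (I ! j)"
    using valid_D[OF v jI] by (simp add: s_def slack_def)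
  define ld where "ld i = (\<Sum>k<j. if f ! k = i then fst (I ! k) else 0)" for i
  define Big where "Big = {k. k < j \<and> s < fst (I ! k)}"
  have finB: "finite Big" unfolding Big_def by simp
  have A: "s < ld i" if "i < c" for i
    using ff_props(2)[OF v, of j i] that j dj unfolding f_def n_def ld_def by simp
  have pairF: "fst (I ! k) \<le> s" if "k < k'" "k' \<le> j" "f ! k = f ! k'" for k k'
    using pair[OF srt, of j k k' "\<lambda>x. f ! x"] fcomp[of k'] j that unfolding n_def s_def by simp
  have pairT: "fst (I ! k) \<le> s" if "k < k'" "k' \<le> j" "tau k = tau k'" for k k'
    using pair[OF srt, of j k k' tau] tcomp[of k'] j that unfolding n_def s_def by simp
  have B: "f ! k < c" if "k \<in> Big" for k
  proof -
    have k: "k < j" "s < fst (I ! k)" using that by (auto simp: Big_def)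
    have "f ! k \<le> c" using fle[of k] k j by simp
    moreover have "f ! k \<noteq> c" using pairF[of k j] k j by auto
    ultimately show ?thesis by simp
  qed
  define X where "X i = (\<Sum>k\<in>{k. k \<in> Big \<and> f ! k = i}. fst (I ! k) - s - 1)" for i
  have C: "s + 1 + X i \<le> ld i" if i: "i < c" for i
  proof (cases "{k. k \<in> Big \<and> f ! k = i} = {}")
    case True
    have "X i = 0" unfolding X_def True by simp
    then show ?thesis using A[OF i] by simp
  next
    case False
    then obtain b where b: "b \<in> Big" "f ! b = i" by auto
    have one: "{k. k \<in> Big \<and> f ! k = i} = {b}"
    proof (rule set_eqI, rule iffI)
      fix x assume "x \<in> {k. k \<in> Big \<and> f ! k = i}"
      then have x: "x \<in> Big" "f ! x = i" by auto
      show "x \<in> {b}"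
      proof (rule ccontr)
        assume "x \<notin> {b}"
        then consider "x < b" | "b < x" by fastforce
        then show False
        proof cases
          case 1 then show False using pairF[of x b] x b unfolding Big_def by fastforce
        next
          case 2 then show False using pairF[of b x] x b unfolding Big_def by fastforce
        qed
      qed
    qed (use b in auto)
    then have "X i = fst (I ! b) - s - 1" by (simp add: X_def)
    moreover have "fst (I ! b) \<le> ld i"
    proof -
      have bj: "b < j" using b by (simp add: Big_def)
      have "fst (I ! b) = (if f ! b = i then fst (I ! b) else 0)" using b by simp
      also have "\<dots> \<le> ld i" unfolding ld_def
        by (rule member_le_sum) (use bj in auto)
      finally show ?thesis .
    qed
    moreover have "s < fst (I ! b)" using b by (simp add: Big_def)
    ultimately show ?thesis by linarith
  qed
  have D: "c * (s + 1) + (\<Sum>k\<in>Big. fst (I ! k) - s - 1) \<le> (\<Sum>i<c. ld i)"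
  proof -
    have "(\<Sum>k\<in>Big. fst (I ! k) - s - 1) = (\<Sum>i<c. X i)"
    proof -
      have "(\<lambda>k. f ! k) ` Big \<subseteq> {..<c}" using B by auto
      from sum.group[OF finB _ this, of "\<lambda>k. fst (I ! k) - s - 1"] show ?thesis
        unfolding X_def by simp
    qed
    moreover have "(\<Sum>i<c. s + 1 + X i) \<le> (\<Sum>i<c. ld i)" by (rule sum_mono) (use C in auto)
    moreover have "(\<Sum>i<c. s + 1 + X i) = c * (s + 1) + (\<Sum>i<c. X i)"
      by (simp only: sum.distrib sum_constant card_lessThan) simp
    ultimately show ?thesis by linarith
  qed
  have E: "(\<Sum>i<c. ld i) \<le> (\<Sum>k<j. fst (I ! k))"
  proof -
    have "(\<Sum>i<c. ld i) = (\<Sum>k<j. \<Sum>i<c. if f ! k = i then fst (I ! k) else 0)"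
      unfolding ld_def by (rule sum.swap)
    also have "\<dots> = (\<Sum>k<j. if f ! k < c then fst (I ! k) else 0)" by simp
    also have "\<dots> \<le> (\<Sum>k<j. fst (I ! k))" by (rule sum_mono) simp
    finally show ?thesis .
  qed
  define R where "R = tau ` {..j}"
  define W where "W r = (\<Sum>k\<in>{k. k \<in> {..j} \<and> tau k = r}. fst (I ! k))" for r
  have finR: "finite R" by (simp add: R_def)
  have sumR: "(\<Sum>k\<le>j. fst (I ! k)) = (\<Sum>r\<in>R. W r)"
    unfolding W_def R_def using sum.group[of "{..j}" "tau ` {..j}" tau "\<lambda>k. fst (I ! k)"] by auto
  have Wl: "\<exists>l. l \<le> j \<and> tau l = r \<and> W r = completion I tau l \<and> (\<forall>k. k \<le> j \<and> tau k = r \<longrightarrow> k \<le> l)"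
    if r: "r \<in> R" for r
  proof -
    define Q where "Q = {k. k \<le> j \<and> tau k = r}"
    have finQ: "finite Q" and neQ: "Q \<noteq> {}" using r by (auto simp: Q_def R_def)
    define l where "l = Max Q"
    have lQ: "l \<in> Q" using Max_in[OF finQ neQ] by (simp add: l_def)
    have ge: "k \<le> l" if "k \<in> Q" for k using Max_ge[OF finQ that] by (simp add: l_def)
    have "{k. k \<le> l \<and> tau k = tau l} = {k. k \<in> {..j} \<and> tau k = r}"
      using lQ ge by (auto simp: Q_def)
    then have "W r = completion I tau l" by (simp add: W_def completion_def)
    then show ?thesis using lQ ge by (auto simp: Q_def)
  qed
  have F: "W (tau j) \<le> s + fst (I ! j)"
  proof -
    obtain l where l: "l \<le> j" "tau l = tau j" "W (tau j) = completion I tau l"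
      "\<forall>k. k \<le> j \<and> tau k = tau j \<longrightarrow> k \<le> l"
      using Wl[of "tau j"] by (auto simp: R_def)
    then have "l = j" by force
    then show ?thesis using l tcomp[of j] j dj by simp
  qed
  define Y where "Y r = (\<Sum>k\<in>{k. k \<in> Big \<and> tau k = r}. fst (I ! k) - s)" for r
  have G: "W r \<le> 2 * s + Y r" if r: "r \<in> R - {tau j}" for r
  proof -
    obtain l where l: "l \<le> j" "tau l = r" "W r = completion I tau l"
      using Wl[of r] r by auto
    have lj: "l < j" using l r by (cases "l = j") auto
    have "W r \<le> snd (I ! l)" using l tcomp[of l] j by simp
    moreover have "slack (I ! l) \<le> s"
      using sorted_nth_mono[OF srt, of l j] l j unfolding s_def n_def by simp
    moreover have "I ! l \<in> set I" using lj j n_def by simp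
    ultimately have Wle: "W r \<le> s + fst (I ! l)" using valid_D[OF v, of "I ! l"]
      by (simp add: slack_def)
    show ?thesis
    proof (cases "l \<in> Big")
      case True
      have "fst (I ! l) - s \<le> Y r" unfolding Y_def
        by (rule member_le_sum) (use True l finB in auto)
      then show ?thesis using Wle True by (simp add: Big_def)
    next
      case False
      then have "fst (I ! l) \<le> s" using lj by (simp add: Big_def)
      then show ?thesis using Wle by simp
    qed
  qed
  have tjR: "tau j \<in> R" by (simp add: R_def)
  have "(\<Sum>r\<in>R. W r) = W (tau j) + (\<Sum>r\<in>R - {tau j}. W r)"
    using sum.remove[OF finR tjR] .
  also have "(\<Sum>r\<in>R - {tau j}. W r) \<le> (\<Sum>r\<in>R - {tau j}. 2 * s + Y r)"
    by (rule sum_mono) (rule G)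
  also have "\<dots> = 2 * s * card (R - {tau j}) + (\<Sum>r\<in>R - {tau j}. Y r)"
    by (simp add: sum.distrib)
  also have "(\<Sum>r\<in>R - {tau j}. Y r) \<le> (\<Sum>r\<in>R. Y r)"
    by (rule sum_mono2[OF finR]) auto
  also have "(\<Sum>r\<in>R. Y r) = (\<Sum>k\<in>Big. fst (I ! k) - s)"
  proof -
    have "tau ` Big \<subseteq> R" by (auto simp: R_def Big_def)
    from sum.group[OF finB finR this, of "\<lambda>k. fst (I ! k) - s"] show ?thesis
      unfolding Y_def by simp
  qed
  also have "(\<Sum>k\<in>Big. fst (I ! k) - s) = (\<Sum>k\<in>Big. (fst (I ! k) - s - 1) + 1)"
    by (rule sum.cong) (auto simp: Big_def)
  also have "\<dots> = (\<Sum>k\<in>Big. fst (I ! k) - s - 1) + card Big"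
    by (simp only: sum.distrib) simp
  finally have OPTside: "(\<Sum>r\<in>R. W r) \<le> W (tau j) + (2 * s * card (R - {tau j}) + ((\<Sum>k\<in>Big. fst (I ! k) - s - 1) + card Big))"
    by simp
  have cardR: "card R \<le> M"
    unfolding M_def machines_used_def R_def using j n_def
    by (intro card_mono) auto
  have cardRm: "card (R - {tau j}) = card R - 1" using tjR finR by simp
  have cR1: "1 \<le> card R" using tjR finR by (simp add: Suc_le_eq card_gt_0_iff) (use tjR in auto)
  have H: "card Big + 1 \<le> M"
  proof -
    have jB: "j \<notin> Big" by (simp add: Big_def)
    have inj: "inj_on tau (insert j Big)"
    proof (rule inj_onI, rule ccontr)
      fix x y assume x: "x \<in> insert j Big" and y: "y \<in> insert j Big" and e: "tau x = tau y" and ne: "x \<noteq> y"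
      have xj: "x \<le> j" and yj: "y \<le> j" using x y by (auto simp: Big_def)
      consider "x < y" | "y < x" using ne by fastforce
      then show False
      proof cases
        case 1
        then have "x \<in> Big" using x yj by auto
        then show False using pairT[of x y] 1 yj e by (simp add: Big_def)
      next
        case 2
        then have "y \<in> Big" using y xj by auto
        then show False using pairT[of y x] 2 xj e by (simp add: Big_def)
      qed
    qed
    have "card Big + 1 = card (tau ` insert j Big)"
      using card_image[OF inj] finB jB by simp
    also have "\<dots> \<le> M" unfolding M_def machines_used_def using j n_def
      by (intro card_mono) (auto simp: Big_def)
    finally show ?thesis .
  qed
  have splitj: "(\<Sum>k\<le>j. fst (I ! k)) = (\<Sum>k<j. fst (I ! k)) + fst (I ! j)"
  proof -
    have "{..j} = insert j {..<j}" by auto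
    then show ?thesis by simp
  qed
  have cardf: "card (set f) \<le> c + 1"
  proof -
    have "set f \<subseteq> {..c}" using fle lf by (auto simp: in_set_conv_nth)
    then show ?thesis using card_mono[of "{..c}" "set f"] by simp
  qed
  obtain m' where m': "M = Suc m'" using H by (cases M) auto
  obtain r' where r': "card R = Suc r'" using cR1 by (cases "card R") auto
  have h1: "c * (s + 1) \<le> s + 2 * (s * r') + card Big"
    using D E sumR splitj OPTside F cardRm r' by (simp add: algebra_simps)
  have h2: "s * r' \<le> s * m'" using cardR m' r' by simp
  have "c + 2 \<le> 2 * M"
  proof (rule ccontr)
    assume "\<not> c + 2 \<le> 2 * M"
    then have "2 * m' + 1 \<le> c" using m' by simp
    then have "(2 * m' + 1) * (s + 1) \<le> c * (s + 1)" by (rule mult_le_mono1)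
    moreover have "(2 * m' + 1) * (s + 1) = 2 * (s * m') + s + 2 * m' + 1" by (simp add: algebra_simps)
    ultimately show False using h1 h2 H m' by linarith
  qed
  then show ?thesis using cardf unfolding f_def M_def by simp
qed

lemma rep_len: "length (concat (replicate r [A, B])) = 2 * r"
  by (induction r) auto

lemma rep_nth: "x < 2 * r \<Longrightarrow> concat (replicate r [A, B]) ! x = (if even x then A else B)"
proof (induction r arbitrary: x)
  case 0 then show ?case by simp
next
  case (Suc r)
  show ?case
  proof (cases x)
    case 0 then show ?thesis by simp
  next
    case (Suc x')
    show ?thesis
    proof (cases x')
      case 0 then show ?thesis using Suc by simp
    next
      case (Suc y)
      then show ?thesis using \<open>x = Suc x'\<close> Suc.IH[of y] \<open>x < 2 * Suc r\<close> by simp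
    qed
  qed
qed

lemma tight_eq: "tight_inst k = concat (replicate k [(k, 2*k), (1, k+1)]) @ replicate (k+1) (k+1, 2*k+1)"
  by (simp add: tight_inst_def map_replicate_const)

lemma tight_len: "length (tight_inst k) = 3 * k + 1"
  by (simp add: tight_eq rep_len)

lemma tight_nth: "x < 3 * k + 1 \<Longrightarrow> tight_inst k ! x =
   (if x < 2 * k then (if even x then (k, 2*k) else (1, k+1)) else (k+1, 2*k+1))"
  by (auto simp: tight_eq nth_append rep_len rep_nth nth_Cons')

lemma tight_set: "set (tight_inst k) \<subseteq> {(k, 2*k), (1, k+1), (k+1, 2*k+1)}"
  by (auto simp: tight_eq)

lemma tight_valid: "1 \<le> k \<Longrightarrow> valid_instance (tight_inst k)"
  using tight_set[of k] unfolding valid_instance_def by auto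

lemma tight_slack: "x \<in> set (tight_inst k) \<Longrightarrow> slack x = k"
  using tight_set[of k] unfolding slack_def by auto

lemma tight_sorted: "sorted (map slack (tight_inst k))"
proof (rule sorted_iff_nth_mono[THEN iffD2], intro allI impI)
  fix i j assume "i \<le> j" "j < length (map slack (tight_inst k))"
  then show "map slack (tight_inst k) ! i \<le> map slack (tight_inst k) ! j"
    using tight_slack[of "tight_inst k ! i" k] tight_slack[of "tight_inst k ! j" k] by simp
qed

lemma tight_lower:
  assumes k: "1 \<le> k" and feas: "feasible (tight_inst k) tau"
  shows "k + 1 \<le> machines_used (tight_inst k) tau"
proof -
  let ?I = "tight_inst k"
  have inj: "inj_on tau {2*k..3*k}"
  proof (rule inj_onI, rule ccontr)
    fix x y assume x: "x \<in> {2*k..3*k}" and y: "y \<in> {2*k..3*k}" and e: "tau x = tau y" and ne: "x \<noteq> y"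
    have c: "completion ?I tau z \<le> snd (?I ! z)" if "z \<le> 3 * k" for z
      using feas that unfolding feasible_def tight_len by simp
    have sl: "slack (?I ! (3*k)) = k" by (simp add: tight_nth slack_def)
    consider "x < y" | "y < x" using ne by fastforce
    then show False
    proof cases
      case 1
      have "fst (?I ! x) \<le> slack (?I ! (3*k))"
        by (rule pair[OF tight_sorted[of k], of "3*k" x y tau]) (use 1 x y e c in \<open>auto simp: tight_len\<close>)
      then show False using x sl by (simp add: tight_nth)
    next
      case 2
      have "fst (?I ! y) \<le> slack (?I ! (3*k))"
        by (rule pair[OF tight_sorted[of k], of "3*k" y x tau]) (use 2 x y e c in \<open>auto simp: tight_len\<close>)
      then show False using y sl by (simp add: tight_nth)
    qed
  qed
  have "k + 1 = card (tau ` {2*k..3*k})" using card_image[OF inj] by simp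
  also have "\<dots> \<le> machines_used ?I tau" unfolding machines_used_def tight_len
    by (intro card_mono) auto
  finally show ?thesis .
qed

definition sig :: "nat \<Rightarrow> nat \<Rightarrow> nat" where
  "sig k x = (if x < 2 * k then (if even x then x div 2 else k) else x - 2 * k)"

lemma compl_le:
  assumes "{x. x \<le> j \<and> tau x = tau j} \<subseteq> A" "finite A"
  shows "completion I tau j \<le> (\<Sum>x\<in>A. fst (I ! x))"
  unfolding completion_def by (rule sum_mono2[OF assms(2) assms(1)]) simp

lemma tight_odd_sum:
  assumes "1 \<le> k"
  shows "(\<Sum>x\<in>(\<lambda>q. 2 * q + 1) ` {..<k}. fst (tight_inst k ! x)) \<le> k"
proof -
  have "(\<Sum>x\<in>(\<lambda>q. 2 * q + 1) ` {..<k}. fst (tight_inst k ! x))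
      \<le> (\<Sum>q<k. fst (tight_inst k ! (2 * q + 1)))"
    using sum_image_le[of "{..<k}" "\<lambda>x. fst (tight_inst k ! x)" "\<lambda>q. 2 * q + 1"] by (simp add: o_def)
  also have "\<dots> = (\<Sum>q<k. 1)"
    by (rule sum.cong) (auto simp: tight_nth)
  finally show ?thesis by simp
qed

lemma tight_upper:
  assumes k: "1 \<le> k"
  shows "feasible (tight_inst k) (sig k) \<and> machines_used (tight_inst k) (sig k) \<le> k + 1"
proof
  let ?I = "tight_inst k"
  let ?O = "(\<lambda>q. 2 * q + 1) ` {..<k}"
  have "completion ?I (sig k) j \<le> snd (?I ! j)" if j: "j < 3 * k + 1" for j
  proof -
    consider (a) "j < 2 * k" "even j" | (b) "j < 2 * k" "odd j" | (c) "2 * k \<le> j" "j < 3 * k" | (d) "j = 3 * k"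
      using j by linarith
    then show ?thesis
    proof cases
      case a
      have "{x. x \<le> j \<and> sig k x = sig k j} \<subseteq> {j}"
        using a by (auto simp: sig_def elim!: evenE oddE)
      then have "completion ?I (sig k) j \<le> (\<Sum>x\<in>{j}. fst (?I ! x))" by (rule compl_le) simp
      then show ?thesis using a by (simp add: tight_nth)
    next
      case b
      have "{x. x \<le> j \<and> sig k x = sig k j} \<subseteq> ?O"
      proof
        fix x assume x: "x \<in> {x. x \<le> j \<and> sig k x = sig k j}"
        then have xl: "x < 2 * k" "sig k x = k" using b by (auto simp: sig_def)
        then have "odd x" by (auto simp: sig_def split: if_splits elim!: evenE)
        then obtain q where q: "x = 2 * q + 1" by (auto elim!: oddE)
        then show "x \<in> ?O" using xl by auto
      qed
      then have "completion ?I (sig k) j \<le> (\<Sum>x\<in>?O. fst (?I ! x))" by (rule compl_le) simp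
      then show ?thesis using b tight_odd_sum[OF k] by (simp add: tight_nth)
    next
      case c
      define r where "r = j - 2 * k"
      have r: "r < k" "j = 2 * k + r" using c by (auto simp: r_def)
      have "{x. x \<le> j \<and> sig k x = sig k j} \<subseteq> {2 * r, j}"
        using r by (auto simp: sig_def split: if_splits elim!: evenE oddE)
      then have "completion ?I (sig k) j \<le> (\<Sum>x\<in>{2 * r, j}. fst (?I ! x))" by (rule compl_le) simp
      then show ?thesis using r by (simp add: tight_nth)
    next
      case d
      have "{x. x \<le> j \<and> sig k x = sig k j} \<subseteq> insert j ?O"
      proof
        fix x assume x: "x \<in> {x. x \<le> j \<and> sig k x = sig k j}"
        show "x \<in> insert j ?O"
        proof (cases "x < 2 * k")
          case True
          then have "sig k x = k" using x d by (auto simp: sig_def)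
          then have "odd x" using True by (auto simp: sig_def split: if_splits elim!: evenE)
          then obtain q where q: "x = 2 * q + 1" by (auto elim!: oddE)
          then show ?thesis using True by auto
        next
          case False
          then show ?thesis using x d by (auto simp: sig_def)
        qed
      qed
      then have "completion ?I (sig k) j \<le> (\<Sum>x\<in>insert j ?O. fst (?I ! x))" by (rule compl_le) simp
      also have "\<dots> \<le> fst (?I ! j) + (\<Sum>x\<in>?O. fst (?I ! x))"
        by (simp add: sum.insert_if)
      finally show ?thesis using d tight_odd_sum[OF k] by (simp add: tight_nth)
    qed
  qed
  moreover have "sig k j < 3 * k + 1" if "j < 3 * k + 1" for j using that by (auto simp: sig_def)
  ultimately show "feasible ?I (sig k)" unfolding feasible_def tight_len by simp
  have "sig k ` {..<length ?I} \<subseteq> {..k}" by (auto simp: sig_def tight_len)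
  then show "machines_used ?I (sig k) \<le> k + 1" unfolding machines_used_def
    using card_mono[of "{..k}"] by fastforce
qed

lemma ffP: "set (ff_run (concat (replicate r [(k, 2*k), (1, k+1)]) @ rest) (\<lambda>i. if i < m then k+1 else 0))
   = {m..<m+r} \<union> set (ff_run rest (\<lambda>i. if i < m + r then k+1 else 0))"
proof (induction r arbitrary: m)
  case 0 then show ?case by simp
next
  case (Suc r)
  define L where "L = (\<lambda>i::nat. if i < m then k+1 else 0)"
  have l1: "(LEAST i. L i + k \<le> 2 * k) = m"
    by (rule Least_equality) (auto simp: L_def not_less[symmetric])
  define L1 where "L1 = L(m := L m + k)"
  have l2: "(LEAST i. L1 i + 1 \<le> k + 1) = m"
    by (rule Least_equality) (auto simp: L1_def L_def not_less[symmetric] split: if_splits)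
  have L2: "L1(m := L1 m + 1) = (\<lambda>i. if i < Suc m then k+1 else 0)"
    by (auto simp: fun_eq_iff L1_def L_def)
  define xs where "xs = concat (replicate r [(k, 2*k), (1, k+1)]) @ rest"
  have e: "concat (replicate (Suc r) [(k, 2*k), (1, k+1)]) @ rest = (k, 2*k) # (1, k+1) # xs"
    by (simp add: xs_def)
  have "ff_run ((k, 2*k) # (1, k+1) # xs) L = m # m # ff_run xs (\<lambda>i. if i < Suc m then k+1 else 0)"
    by (simp only: ff_run.simps Let_def l1 flip: L1_def) (simp only: l2 L2)
  then have "set (ff_run (concat (replicate (Suc r) [(k, 2*k), (1, k+1)]) @ rest) L)
     = insert m (set (ff_run xs (\<lambda>i. if i < Suc m then k+1 else 0)))"
    by (simp only: e) simp
  also have "\<dots> = {m..<m + Suc r} \<union> set (ff_run rest (\<lambda>i. if i < m + Suc r then k+1 else 0))"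
    using Suc.IH[of "Suc m"] unfolding xs_def by auto
  finally show ?case unfolding L_def .
qed

lemma ffC: "set (ff_run (replicate t (k+1, 2*k+1)) (\<lambda>i. if i < m then k+1 else 0)) = {m..<m+t}"
proof (induction t arbitrary: m)
  case 0 then show ?case by simp
next
  case (Suc t)
  define L where "L = (\<lambda>i::nat. if i < m then k+1 else 0)"
  have l1: "(LEAST i. L i + (k+1) \<le> 2 * k + 1) = m"
    by (rule Least_equality) (auto simp: L_def not_less[symmetric])
  have L1: "L(m := L m + (k+1)) = (\<lambda>i. if i < Suc m then k+1 else 0)"
    by (auto simp: fun_eq_iff L_def)
  have "ff_run (replicate (Suc t) (k+1, 2*k+1)) L = m # ff_run (replicate t (k+1, 2*k+1)) (\<lambda>i. if i < Suc m then k+1 else 0)"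
    by (simp only: replicate_Suc ff_run.simps Let_def l1 L1)
  then show ?case using Suc.IH[of "Suc m"] unfolding L_def by auto
qed

lemma tight_FF: "FF (tight_inst k) = 2 * k + 1"
proof -
  have z: "(\<lambda>i::nat. if i < 0 then k+1 else 0) = (\<lambda>_. 0)" by simp
  have "set (ff_run (tight_inst k) (\<lambda>_. 0)) = {0..<k} \<union> {k..<k + (k+1)}"
    using ffP[where r=k and k=k and m=0 and rest="replicate (k+1) (k+1, 2*k+1)", unfolded z add_0]
      ffC[where t="k+1" and k=k and m=k]
    unfolding tight_eq by simp
  also have "\<dots> = {0..<2*k+1}" by auto
  finally show ?thesis by (simp add: FF_def)
qed

theorem mainTheorem6:
  shows "(\<forall>I. valid_instance I \<and> sorted (map slack I) \<longrightarrow>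
            (2 \<le> OPT I \<longrightarrow> FF I < 2 * OPT I) \<and> (OPT I = 1 \<longrightarrow> FF I = 1)) \<and>
         (\<forall>k::nat. 1 \<le> k \<longrightarrow> OPT (tight_inst k) = k + 1 \<and> FF (tight_inst k) = 2 * k + 1)"
proof (intro conjI allI impI)
  fix I assume a: "valid_instance I \<and> sorted (map slack I)" and o: "2 \<le> OPT I"
  then have v: "valid_instance I" and srt: "sorted (map slack I)" by auto
  obtain tau where tau: "feasible I tau" "OPT I = machines_used I tau" using opt_props(1)[OF v] by blast
  have "I \<noteq> []" using o tau by (auto simp: machines_used_def)
  from ff_bound[OF v srt tau(1) this] show "FF I < 2 * OPT I" using tau by (simp add: FF_def)
next
  fix I assume a: "valid_instance I \<and> sorted (map slack I)" and o: "OPT I = 1"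
  then have v: "valid_instance I" and srt: "sorted (map slack I)" by auto
  obtain tau where tau: "feasible I tau" "OPT I = machines_used I tau" using opt_props(1)[OF v] by blast
  have ne: "I \<noteq> []" using o tau by (auto simp: machines_used_def)
  have "FF I \<le> 1" using ff_bound[OF v srt tau(1) ne] o tau by (simp add: FF_def)
  moreover have "set (ff_run I (\<lambda>_. 0)) \<noteq> {}" using ne ff_len[of I "\<lambda>_. 0"] by auto
  then have "FF I \<noteq> 0" by (simp add: FF_def)
  ultimately show "FF I = 1" by simp
next
  fix k :: nat assume k: "1 \<le> k"
  obtain tau where tau: "feasible (tight_inst k) tau" "OPT (tight_inst k) = machines_used (tight_inst k) tau"
    using opt_props(1)[OF tight_valid[OF k]] by blast
  have "k + 1 \<le> OPT (tight_inst k)" using tight_lower[OF k tau(1)] tau(2) by simp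
  moreover have "OPT (tight_inst k) \<le> k + 1"
    using opt_props(2)[OF tight_valid[OF k], of "sig k"] tight_upper[OF k] by simp
  ultimately show "OPT (tight_inst k) = k + 1" by simp
next
  fix k :: nat
  show "FF (tight_inst k) = 2 * k + 1" by (rule tight_FF)
qed

end
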